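(* Let $0<\varepsilon\le1$ and let $\mathfrak L_0$ be the linear span of $\{e^{-\alpha x^2/(2\sqrt\varepsilon)}:\alpha\in(0,1)\}$. Then $\mathfrak L_0\subset D(S_\varepsilon)$.
   Context: Work in $L^2(\mathbb{R})$. Let $q$ be multiplication by $x$ and $p=-i\,d/dx$ (self-adjoint; $q$ injective). Let $t=q^{-1}p$ with $D(t)=\{f\in D(p):pf\in D(q^{-1})\}$ and $L^2_0$ the subspace of even functions. Define $S_\varepsilon$ in $L^2_0$ by $D(S_\varepsilon)=\{f\in L^2_0\cap\bigcap_{n\ge0}D(t^{2n+1}):\lim_{N\to\infty}\sum_{n=0}^N\frac{(-1)^n}{2n+1}(\sqrt\varepsilon t)^{2n+1}f$ exists in norm$\}$, $S_\varepsilon f=-\varepsilon^{-1/2}\sum_{n\ge0}\frac{(-1)^n}{2n+1}(\sqrt\varepsilon t)^{2n+1}f$. *)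

theory Defs
  imports "HOL-Analysis.Analysis"
begin

text \<open>Elements of L^2(R) are represented by complex-valued functions on the reals,
  modulo equality almost everywhere w.r.t. Lebesgue measure.\<close>

definition L2 :: "(real \<Rightarrow> complex) \<Rightarrow> bool" where
  "L2 f \<longleftrightarrow> f \<in> borel_measurable lborel \<and> integrable lborel (\<lambda>x. (cmod (f x))\<^sup>2)"

definition l2_norm :: "(real \<Rightarrow> complex) \<Rightarrow> real" where
  "l2_norm f = sqrt (integral\<^sup>L lborel (\<lambda>x. (cmod (f x))\<^sup>2))"

text \<open>Graph of p = -i d/dx (self-adjoint, domain H^1): f has an absolutely continuous
  representative f(x) = c + i * integral from 0 to x of h, with h = p f in L^2.\<close>

definition p_rel :: "(real \<Rightarrow> complex) \<Rightarrow> (real \<Rightarrow> complex) \<Rightarrow> bool" where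
  "p_rel f h \<longleftrightarrow> L2 f \<and> L2 h \<and>
     (\<exists>c. AE x in lborel. f x = c + \<i> * interval_lebesgue_integral lborel (ereal 0) (ereal x) h)"

text \<open>Graph of t = q^{-1} p: g = t f iff p f = x * g with g in L^2.\<close>

definition t_rel :: "(real \<Rightarrow> complex) \<Rightarrow> (real \<Rightarrow> complex) \<Rightarrow> bool" where
  "t_rel f g \<longleftrightarrow> (\<exists>h. p_rel f h \<and> L2 g \<and> (AE x in lborel. h x = complex_of_real x * g x))"

fun tpow_rel :: "nat \<Rightarrow> (real \<Rightarrow> complex) \<Rightarrow> (real \<Rightarrow> complex) \<Rightarrow> bool" where
  "tpow_rel 0 f g \<longleftrightarrow> L2 f \<and> g = f"
| "tpow_rel (Suc n) f g \<longleftrightarrow> (\<exists>h. tpow_rel n f h \<and> t_rel h g)"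

definition in_dom_S :: "real \<Rightarrow> (real \<Rightarrow> complex) \<Rightarrow> bool" where
  "in_dom_S \<epsilon> f \<longleftrightarrow> L2 f \<and> (AE x in lborel. f (- x) = f x) \<and>
     (\<exists>g :: nat \<Rightarrow> real \<Rightarrow> complex. (\<forall>n. tpow_rel (2 * n + 1) f (g n)) \<and>
        (\<exists>L. L2 L \<and>
          (\<lambda>N. l2_norm (\<lambda>x. (\<Sum>n\<le>N. complex_of_real ((-1) ^ n / real (2 * n + 1)
                   * sqrt \<epsilon> ^ (2 * n + 1)) * g n x) - L x)) \<longlonglongrightarrow> 0))"

end

theory Submission
  imports Defs "HOL-Probability.Distributions"
begin

lemma gauss_moment_integrable:
  fixes a :: real assumes a: "0 < a"
  shows "integrable lborel (\<lambda>x. exp (- a * x\<^sup>2) * x ^ k)"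
proof -
  define \<sigma> where "\<sigma> = sqrt (1 / (2 * a))"
  have s2: "\<sigma>\<^sup>2 = 1 / (2 * a)" using a by (simp add: \<sigma>_def)
  have sp: "\<sigma> > 0" using a by (simp add: \<sigma>_def)
  have int: "integrable lborel (\<lambda>x. sqrt (2 * pi * \<sigma>\<^sup>2) * (normal_density 0 \<sigma> x * (x - 0) ^ k))"
    using sp by (intro integrable_mult_right integrable_normal_moment) auto
  moreover have eq: "(\<lambda>x. sqrt (2 * pi * \<sigma>\<^sup>2) * (normal_density 0 \<sigma> x * (x - 0) ^ k))
      = (\<lambda>x. exp (- a * x\<^sup>2) * x ^ k)"
  proof
    fix x
    have "sqrt (2 * pi * \<sigma>\<^sup>2) > 0" using a s2 sp by simp
    moreover have "- (x - 0)\<^sup>2 / (2 * \<sigma>\<^sup>2) = - a * x\<^sup>2" using a unfolding s2 by simp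
    ultimately show "sqrt (2 * pi * \<sigma>\<^sup>2) * (normal_density 0 \<sigma> x * (x - 0) ^ k) = exp (- a * x\<^sup>2) * x ^ k"
      using sp unfolding normal_density_def by (simp add: field_simps)
  qed
  show ?thesis using int unfolding eq .
qed

lemma L2_gauss:
  fixes s b :: real and c :: complex assumes "0 < s" "0 < b"
  shows "L2 (\<lambda>x. c * complex_of_real (x ^ j * exp (- b * x\<^sup>2 / (2 * s))))"
  unfolding L2_def
proof
  show "(\<lambda>x. c * complex_of_real (x ^ j * exp (- b * x\<^sup>2 / (2 * s)))) \<in> borel_measurable lborel"
    by measurable
  have int: "integrable lborel (\<lambda>x. (cmod c)\<^sup>2 * (exp (- (b / s) * x\<^sup>2) * x ^ (2 * j)))"
    using assms by (intro integrable_mult_right gauss_moment_integrable) simp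
  moreover have eq: "(\<lambda>x. (cmod c)\<^sup>2 * (exp (- (b / s) * x\<^sup>2) * x ^ (2 * j)))
    = (\<lambda>x. (cmod (c * complex_of_real (x ^ j * exp (- b * x\<^sup>2 / (2 * s)))))\<^sup>2)"
  proof
    fix x
    have "(exp (- b * x\<^sup>2 / (2 * s)))\<^sup>2 = exp (- (b / s) * x\<^sup>2)"
      by (simp add: power2_eq_square exp_add[symmetric] field_simps)
    moreover have "(\<bar>x\<bar> ^ j)\<^sup>2 = (x ^ j)\<^sup>2" by (simp add: power_abs[symmetric])
    ultimately show "(cmod c)\<^sup>2 * (exp (- (b / s) * x\<^sup>2) * x ^ (2 * j)) = (cmod (c * complex_of_real (x ^ j * exp (- b * x\<^sup>2 / (2 * s)))))\<^sup>2"
      by (simp add: norm_mult norm_power power_mult_distrib abs_mult power_mult power_even_abs[of 2, simplified] power2_abs mult.commute)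
  qed
  show "integrable lborel (\<lambda>x. (cmod (c * complex_of_real (x ^ j * exp (- b * x\<^sup>2 / (2 * s)))))\<^sup>2)"
    using int unfolding eq .
qed

lemma L2_add:
  assumes "L2 f" "L2 g" shows "L2 (\<lambda>x. f x + g x)"
  unfolding L2_def
proof
  have mf: "f \<in> borel_measurable borel" "g \<in> borel_measurable borel" using assms unfolding L2_def by auto
  show "(\<lambda>x. f x + g x) \<in> borel_measurable lborel" using mf by measurable
  show "integrable lborel (\<lambda>x. (cmod (f x + g x))\<^sup>2)"
  proof (rule Bochner_Integration.integrable_bound)
    show "integrable lborel (\<lambda>x. 2 * (cmod (f x))\<^sup>2 + 2 * (cmod (g x))\<^sup>2)"
      using assms unfolding L2_def by auto
    show "(\<lambda>x. (cmod (f x + g x))\<^sup>2) \<in> borel_measurable lborel" using mf by measurable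
    show "AE x in lborel. norm ((cmod (f x + g x))\<^sup>2) \<le> norm (2 * (cmod (f x))\<^sup>2 + 2 * (cmod (g x))\<^sup>2)"
    proof (rule AE_I2)
      fix x
      have "cmod (f x + g x) \<le> cmod (f x) + cmod (g x)" by (rule norm_triangle_ineq)
      then have "(cmod (f x + g x))\<^sup>2 \<le> (cmod (f x) + cmod (g x))\<^sup>2" by (simp add: power_mono)
      also have "\<dots> \<le> 2 * (cmod (f x))\<^sup>2 + 2 * (cmod (g x))\<^sup>2"
      proof -
        have "0 \<le> (cmod (f x) - cmod (g x))\<^sup>2" by simp
        then show ?thesis by (simp add: power2_diff power2_sum)
      qed
      finally show "norm ((cmod (f x + g x))\<^sup>2) \<le> norm (2 * (cmod (f x))\<^sup>2 + 2 * (cmod (g x))\<^sup>2)" by simp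
    qed
  qed
qed

lemma L2_zero: "L2 (\<lambda>x. 0)" unfolding L2_def by simp

lemma L2_sum:
  assumes "finite A" "\<And>k. k \<in> A \<Longrightarrow> L2 (f k)"
  shows "L2 (\<lambda>x. \<Sum>k\<in>A. f k x)"
  using assms
proof (induction A rule: finite_induct)
  case empty then show ?case by (simp add: L2_zero)
next
  case (insert a A) then show ?case by (simp add: L2_add)
qed

definition Gs :: "real \<Rightarrow> (nat \<Rightarrow> real) \<Rightarrow> nat \<Rightarrow> (nat \<Rightarrow> complex) \<Rightarrow> real \<Rightarrow> complex" where
  "Gs s \<alpha> m d = (\<lambda>x. \<Sum>k<m. d k * complex_of_real (exp (- \<alpha> k * x\<^sup>2 / (2 * s))))"

lemma L2_Gs:
  assumes "0 < s" "\<forall>k<m. 0 < \<alpha> k"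
  shows "L2 (Gs s \<alpha> m d)"
proof -
  have eq: "Gs s \<alpha> m d = (\<lambda>x. \<Sum>k<m. d k * complex_of_real (x ^ 0 * exp (- \<alpha> k * x\<^sup>2 / (2 * s))))"
    by (simp add: Gs_def)
  show ?thesis unfolding eq using assms by (intro L2_sum L2_gauss) auto
qed

lemma L2_xGs:
  assumes "0 < s" "\<forall>k<m. 0 < \<alpha> k"
  shows "L2 (\<lambda>x. complex_of_real x * Gs s \<alpha> m d x)"
proof -
  have eq: "(\<lambda>x. complex_of_real x * Gs s \<alpha> m d x) = (\<lambda>x. \<Sum>k<m. d k * complex_of_real (x ^ 1 * exp (- \<alpha> k * x\<^sup>2 / (2 * s))))"
    by (simp add: Gs_def sum_distrib_left mult_ac)
  show ?thesis unfolding eq using assms by (intro L2_sum L2_gauss) auto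
qed

lemma deriv_gauss:
  assumes "s \<noteq> 0" shows "((\<lambda>x. exp (- a * x\<^sup>2 / (2 * s))) has_real_derivative (exp (- a * y\<^sup>2 / (2 * s)) * (- a * y / s))) (at y)"
  using assms by (auto intro!: derivative_eq_intros simp: field_simps)

lemma Gs_deriv:
  assumes "s \<noteq> 0" shows "(Gs s \<alpha> m d has_vector_derivative
     (\<Sum>k<m. d k * complex_of_real (exp (- \<alpha> k * y\<^sup>2 / (2 * s)) * (- \<alpha> k * y / s)))) (at y)"
  unfolding Gs_def
  by (intro has_vector_derivative_sum has_vector_derivative_mult_right has_vector_derivative_of_real deriv_gauss assms)

lemma Gs_deriv_eq:
  "- \<i> * (\<Sum>k<m. d k * complex_of_real (exp (- \<alpha> k * y\<^sup>2 / (2 * s)) * (- \<alpha> k * y / s)))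
   = complex_of_real y * Gs s \<alpha> m (\<lambda>k. \<i> * complex_of_real (\<alpha> k / s) * d k) y"
  by (simp add: Gs_def sum_distrib_left algebra_simps)

lemma t_rel_Gs:
  assumes "0 < s" "\<forall>k<m. 0 < \<alpha> k"
  shows "t_rel (Gs s \<alpha> m d) (Gs s \<alpha> m (\<lambda>k. \<i> * complex_of_real (\<alpha> k / s) * d k))"
proof -
  define g where "g = Gs s \<alpha> m (\<lambda>k. \<i> * complex_of_real (\<alpha> k / s) * d k)"
  define h where "h = (\<lambda>x. complex_of_real x * g x)"
  define F where "F = (\<lambda>y. - \<i> * Gs s \<alpha> m d y)"
  have Fd: "(F has_vector_derivative h y) (at y)" for y
    unfolding F_def h_def g_def Gs_deriv_eq[symmetric]
    using assms by (intro has_vector_derivative_mult_right Gs_deriv) auto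
  have hc: "continuous_on A h" for A
    unfolding h_def g_def Gs_def using assms by (auto intro!: continuous_intros)
  have ftc: "interval_lebesgue_integral lborel (ereal 0) (ereal x) h = F x - F 0" for x
    using interval_integral_FTC_finite[where a=0 and b=x and f=h and F=F, OF hc has_vector_derivative_at_within[OF Fd]]
    by simp
  have "p_rel (Gs s \<alpha> m d) h"
    unfolding p_rel_def
  proof (intro conjI exI AE_I2)
    show "L2 (Gs s \<alpha> m d)" using assms by (rule L2_Gs)
    show "L2 h" unfolding h_def g_def using assms by (rule L2_xGs)
    fix x
    show "Gs s \<alpha> m d x = Gs s \<alpha> m d 0 + \<i> * interval_lebesgue_integral lborel (ereal 0) (ereal x) h"
    proof -
      have "Gs s \<alpha> m d 0 + \<i> * (F x - F 0) = Gs s \<alpha> m d x"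
        by (simp add: F_def right_diff_distrib mult.assoc[symmetric])
      then show ?thesis using ftc[of x] by simp
    qed
  qed
  moreover have "L2 g" unfolding g_def using assms by (rule L2_Gs)
  ultimately show ?thesis unfolding t_rel_def g_def[symmetric] h_def by auto
qed

lemma tpow_Gs:
  assumes "0 < s" "\<forall>k<m. 0 < \<alpha> k"
  shows "tpow_rel n (Gs s \<alpha> m d) (Gs s \<alpha> m (\<lambda>k. (\<i> * complex_of_real (\<alpha> k / s)) ^ n * d k))"
proof (induction n)
  case 0
  then show ?case using L2_Gs[OF assms] by simp
next
  case (Suc n)
  have eq: "(\<lambda>k. \<i> * complex_of_real (\<alpha> k / s) * ((\<i> * complex_of_real (\<alpha> k / s)) ^ n * d k))
     = (\<lambda>k. (\<i> * complex_of_real (\<alpha> k / s)) ^ Suc n * d k)"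
    by (simp add: mult.assoc)
  show ?case using Suc.IH t_rel_Gs[OF assms, of "\<lambda>k. (\<i> * complex_of_real (\<alpha> k / s)) ^ n * d k"]
    unfolding eq by auto
qed

lemma l2_norm_Gs_bound:
  assumes "0 < s" "\<forall>k<m. 0 < \<alpha> k"
  shows "l2_norm (Gs s \<alpha> m d) \<le> (\<Sum>k<m. cmod (d k)) * l2_norm (Gs s \<alpha> m (\<lambda>k. 1))"
proof -
  define D where "D = (\<Sum>k<m. cmod (d k))"
  define e where "e = (\<lambda>k x. exp (- \<alpha> k * x\<^sup>2 / (2 * s)))"
  have D0: "0 \<le> D" unfolding D_def by (simp add: sum_nonneg)
  have G1: "cmod (Gs s \<alpha> m (\<lambda>k. 1) x) = (\<Sum>k<m. e k x)" for x
  proof -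
    have "Gs s \<alpha> m (\<lambda>k. 1) x = complex_of_real (\<Sum>k<m. e k x)" by (simp add: Gs_def e_def)
    moreover have "0 \<le> (\<Sum>k<m. e k x)" unfolding e_def by (simp add: sum_nonneg)
    ultimately show ?thesis by (metis abs_of_nonneg norm_of_real)
  qed
  have pw: "cmod (Gs s \<alpha> m d x) \<le> D * cmod (Gs s \<alpha> m (\<lambda>k. 1) x)" for x
  proof -
    have "cmod (Gs s \<alpha> m d x) \<le> (\<Sum>k<m. cmod (d k * complex_of_real (e k x)))"
      unfolding Gs_def e_def by (rule norm_sum)
    also have "\<dots> = (\<Sum>k<m. cmod (d k) * e k x)"
      by (simp add: norm_mult e_def)
    also have "\<dots> \<le> (\<Sum>k<m. cmod (d k) * (\<Sum>j<m. e j x))"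
    proof (rule sum_mono)
      fix k assume "k \<in> {..<m}"
      then have "e k x \<le> (\<Sum>j<m. e j x)"
        by (intro member_le_sum) (auto simp: e_def)
      then show "cmod (d k) * e k x \<le> cmod (d k) * (\<Sum>j<m. e j x)"
        by (simp add: mult_left_mono)
    qed
    also have "\<dots> = D * cmod (Gs s \<alpha> m (\<lambda>k. 1) x)"
      by (simp add: G1 D_def sum_distrib_right)
    finally show ?thesis .
  qed
  have pw2: "(cmod (Gs s \<alpha> m d x))\<^sup>2 \<le> D\<^sup>2 * (cmod (Gs s \<alpha> m (\<lambda>k. 1) x))\<^sup>2" for x
    using power_mono[OF pw[of x], of 2] by (simp add: power_mult_distrib)
  have i1: "integrable lborel (\<lambda>x. (cmod (Gs s \<alpha> m d x))\<^sup>2)"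
    using L2_Gs[OF assms] unfolding L2_def by auto
  have i2: "integrable lborel (\<lambda>x. (cmod (Gs s \<alpha> m (\<lambda>k. 1) x))\<^sup>2)"
    using L2_Gs[OF assms] unfolding L2_def by auto
  have "(\<integral>x. (cmod (Gs s \<alpha> m d x))\<^sup>2 \<partial>lborel) \<le> (\<integral>x. D\<^sup>2 * (cmod (Gs s \<alpha> m (\<lambda>k. 1) x))\<^sup>2 \<partial>lborel)"
    using i1 i2 pw2 by (intro integral_mono) auto
  also have "\<dots> = D\<^sup>2 * (\<integral>x. (cmod (Gs s \<alpha> m (\<lambda>k. 1) x))\<^sup>2 \<partial>lborel)"
    by simp
  finally have "sqrt (\<integral>x. (cmod (Gs s \<alpha> m d x))\<^sup>2 \<partial>lborel) \<le> sqrt (D\<^sup>2 * (\<integral>x. (cmod (Gs s \<alpha> m (\<lambda>k. 1) x))\<^sup>2 \<partial>lborel))"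
    by (rule real_sqrt_le_mono)
  also have "\<dots> = D * sqrt (\<integral>x. (cmod (Gs s \<alpha> m (\<lambda>k. 1) x))\<^sup>2 \<partial>lborel)"
    using D0 by (simp add: real_sqrt_mult)
  finally show ?thesis unfolding l2_norm_def D_def .
qed

lemma coef_summable:
  fixes s a :: real assumes "0 < s" "0 < a" "a < 1"
  shows "summable (\<lambda>n. complex_of_real ((-1) ^ n / real (2 * n + 1) * s ^ (2 * n + 1))
            * (\<i> * complex_of_real (a / s)) ^ (2 * n + 1))"
proof (rule summable_comparison_test)
  show "summable (\<lambda>n. a ^ n)" using assms by (simp add: summable_geometric)
  show "\<exists>N. \<forall>n\<ge>N. norm (complex_of_real ((-1) ^ n / real (2 * n + 1) * s ^ (2 * n + 1))
            * (\<i> * complex_of_real (a / s)) ^ (2 * n + 1)) \<le> a ^ n"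
  proof (intro exI allI impI)
    fix n :: nat
    have "norm (complex_of_real ((-1) ^ n / real (2 * n + 1) * s ^ (2 * n + 1))
            * (\<i> * complex_of_real (a / s)) ^ (2 * n + 1))
        = s ^ (2 * n + 1) / real (2 * n + 1) * (a / s) ^ (2 * n + 1)"
    proof -
      have n1: "norm (\<i> * complex_of_real (a / s)) = a / s" using assms by (simp only: norm_mult norm_ii norm_of_real) simp
      have n2: "\<bar>(-1) ^ n / real (2 * n + 1) * s ^ (2 * n + 1)\<bar> = s ^ (2 * n + 1) / real (2 * n + 1)"
        using assms by (simp add: abs_mult power_abs)
      show ?thesis by (metis n1 n2 norm_mult norm_power norm_of_real)
    qed
    also have "\<dots> = a ^ (2 * n + 1) / real (2 * n + 1)"
      using assms by (simp add: power_divide)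
    also have "\<dots> \<le> a ^ (2 * n + 1)"
      using assms by (simp add: divide_le_eq)
    also have "\<dots> \<le> a ^ n"
      using assms by (intro power_decreasing) auto
    finally show "norm (complex_of_real ((-1) ^ n / real (2 * n + 1) * s ^ (2 * n + 1))
            * (\<i> * complex_of_real (a / s)) ^ (2 * n + 1)) \<le> a ^ n" .
  qed
qed

theorem lemma3p2:
  fixes \<epsilon> :: real and m :: nat and c :: "nat \<Rightarrow> complex" and \<alpha> :: "nat \<Rightarrow> real"
  assumes "0 < \<epsilon>" and "\<epsilon> \<le> 1"
    and "\<forall>k<m. 0 < \<alpha> k \<and> \<alpha> k < 1"
  shows "in_dom_S \<epsilon> (\<lambda>x. \<Sum>k<m. c k * complex_of_real (exp (- \<alpha> k * x\<^sup>2 / (2 * sqrt \<epsilon>))))"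
proof -
  define s where "s = sqrt \<epsilon>"
  have s0: "0 < s" using assms(1) by (simp add: s_def)
  have ap: "\<forall>k<m. 0 < \<alpha> k" using assms(3) by auto
  define r where "r = (\<lambda>n::nat. (-1) ^ n / real (2 * n + 1) * s ^ (2 * n + 1))"
  define z where "z = (\<lambda>k. \<i> * complex_of_real (\<alpha> k / s))"
  define tm where "tm = (\<lambda>k n. complex_of_real (r n) * z k ^ (2 * n + 1))"
  define P where "P = (\<lambda>k N. \<Sum>n\<le>N. tm k n)"
  define S where "S = (\<lambda>k. suminf (tm k))"
  define g where "g = (\<lambda>n. Gs s \<alpha> m (\<lambda>k. z k ^ (2 * n + 1) * c k))"
  define L where "L = Gs s \<alpha> m (\<lambda>k. S k * c k)"
  have feq: "(\<lambda>x. \<Sum>k<m. c k * complex_of_real (exp (- \<alpha> k * x\<^sup>2 / (2 * sqrt \<epsilon>)))) = Gs s \<alpha> m c"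
    by (simp add: Gs_def s_def)
  have PS: "P k \<longlonglongrightarrow> S k" if "k < m" for k
  proof -
    have "summable (tm k)"
      unfolding tm_def r_def z_def using that assms(3) s0 by (intro coef_summable) auto
    then show ?thesis unfolding P_def S_def by (rule summable_LIMSEQ')
  qed
  have expr: "(\<lambda>x. (\<Sum>n\<le>N. complex_of_real ((-1) ^ n / real (2 * n + 1) * sqrt \<epsilon> ^ (2 * n + 1)) * g n x) - L x)
      = Gs s \<alpha> m (\<lambda>k. (P k N - S k) * c k)" for N
  proof
    fix x
    have "(\<Sum>n\<le>N. complex_of_real ((-1) ^ n / real (2 * n + 1) * sqrt \<epsilon> ^ (2 * n + 1)) * g n x)
        = (\<Sum>n\<le>N. \<Sum>k<m. tm k n * (c k * complex_of_real (exp (- \<alpha> k * x\<^sup>2 / (2 * s)))))"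
      by (simp add: g_def Gs_def tm_def r_def s_def sum_distrib_left mult_ac)
    also have "\<dots> = (\<Sum>k<m. P k N * (c k * complex_of_real (exp (- \<alpha> k * x\<^sup>2 / (2 * s)))))"
      by (subst sum.swap) (simp add: P_def sum_distrib_right)
    finally show "(\<Sum>n\<le>N. complex_of_real ((-1) ^ n / real (2 * n + 1) * sqrt \<epsilon> ^ (2 * n + 1)) * g n x) - L x
      = Gs s \<alpha> m (\<lambda>k. (P k N - S k) * c k) x"
      by (simp add: L_def Gs_def sum_subtractf[symmetric] algebra_simps)
  qed
  define K where "K = l2_norm (Gs s \<alpha> m (\<lambda>k. 1))"
  define D where "D = (\<lambda>N. \<Sum>k<m. cmod ((P k N - S k) * c k))"
  have D0: "D \<longlonglongrightarrow> 0"
  proof -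
    have "D \<longlonglongrightarrow> (\<Sum>k<m. cmod ((S k - S k) * c k))"
      unfolding D_def by (intro tendsto_sum tendsto_norm tendsto_mult_right tendsto_diff PS tendsto_const) auto
    then show ?thesis by simp
  qed
  have conv: "(\<lambda>N. l2_norm (\<lambda>x. (\<Sum>n\<le>N. complex_of_real ((-1) ^ n / real (2 * n + 1) * sqrt \<epsilon> ^ (2 * n + 1)) * g n x) - L x)) \<longlonglongrightarrow> 0"
    unfolding expr
  proof (rule tendsto_sandwich[of "\<lambda>_. 0" _ _ "\<lambda>N. D N * K"])
    show "\<forall>\<^sub>F N in sequentially. 0 \<le> l2_norm (Gs s \<alpha> m (\<lambda>k. (P k N - S k) * c k))"
      by (simp add: l2_norm_def integral_nonneg)
    show "\<forall>\<^sub>F N in sequentially. l2_norm (Gs s \<alpha> m (\<lambda>k. (P k N - S k) * c k)) \<le> D N * K"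
      unfolding D_def K_def using l2_norm_Gs_bound[OF s0 ap] by simp
    show "(\<lambda>_. 0) \<longlonglongrightarrow> (0::real)" by simp
    show "(\<lambda>N. D N * K) \<longlonglongrightarrow> 0" using tendsto_mult_left_zero[OF D0] by simp
  qed
  have tp: "tpow_rel (2 * n + 1) (Gs s \<alpha> m c) (g n)" for n
    unfolding g_def z_def using tpow_Gs[OF s0 ap] .
  show ?thesis
    unfolding feq in_dom_S_def
  proof (intro conjI exI allI)
    show "L2 (Gs s \<alpha> m c)" by (rule L2_Gs[OF s0 ap])
    show "AE x in lborel. Gs s \<alpha> m c (- x) = Gs s \<alpha> m c x" by (simp add: Gs_def)
    show "tpow_rel (2 * n + 1) (Gs s \<alpha> m c) (g n)" for n by (rule tp)
    show "L2 L" unfolding L_def by (rule L2_Gs[OF s0 ap])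
    show "(\<lambda>N. l2_norm (\<lambda>x. (\<Sum>n\<le>N. complex_of_real ((-1) ^ n / real (2 * n + 1) * sqrt \<epsilon> ^ (2 * n + 1)) * g n x) - L x)) \<longlonglongrightarrow> 0"
      by (rule conv)
  qed
qed

end
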